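(* Let $n\ge 1$ be an integer and let $U_{6n}=\langle a,b : a^{2n}=b^3=1,\ a^{-1}ba=b^{-1}\rangle$ (a group of order $6n$). Let $\Gamma_{U_{6n}}$ be its non-commuting graph. Then the spectrum of the distance Laplacian matrix $D^L(\Gamma_{U_{6n}})$ (eigenvalues counted with multiplicity, multiplicities being added if two of the listed values coincide) consists of: (a) $0$ with multiplicity $1$; (b) $5n$ with multiplicity $3$; (c) $6n$ with multiplicity $3(n-1)$; (d) $7n$ with multiplicity $2n-1$.
   Context: For a finite non-abelian group $G$ with centre $Z(G)$, the non-commuting graph $\Gamma_G$ is the simple undirected graph with vertex set $G\setminus Z(G)$, in which two distinct vertices $u,v$ are adjacent if and only if $uv\ne vu$. For a connected graph $H$, $d_{uv}$ denotes the length of a shortest path between $u$ and $v$; the distance matrix $D(H)$ has $(u,v)$-entry $d_{uv}$. The transmission of a vertex $v$ is $\sum_{u} d_{uv}$, and $Tr(H)$ is the diagonal matrix of vertex transmissions. The distance Laplacian matrix is $D^L(H)=Tr(H)-D(H)$. *)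

theory Defs
  imports "Jordan_Normal_Form.Char_Poly"
begin

text \<open>The group U_{6n} = <a,b | a^(2n) = b^3 = 1, a^-1 b a = b^-1>, realised concretely:
  the element a^i b^j (0 <= i < 2n, 0 <= j < 3) is represented by the pair (i,j).
  From b a = a b^-1 we get b^j a^i = a^i b^((-1)^i j), hence
  (a^i1 b^j1)(a^i2 b^j2) = a^(i1+i2) b^((-1)^i2 j1 + j2).\<close>

definition U6n_carrier :: "nat \<Rightarrow> (nat \<times> nat) set" where
  "U6n_carrier n = {0..<2*n} \<times> {0..<3}"

definition U6n_mult :: "nat \<Rightarrow> nat \<times> nat \<Rightarrow> nat \<times> nat \<Rightarrow> nat \<times> nat" where
  "U6n_mult n x y = ((fst x + fst y) mod (2*n),
                     ((if even (fst y) then snd x else 2 * snd x) + snd y) mod 3)"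

definition centre :: "'a set \<Rightarrow> ('a \<Rightarrow> 'a \<Rightarrow> 'a) \<Rightarrow> 'a set" where
  "centre G m = {z \<in> G. \<forall>g\<in>G. m z g = m g z}"

definition nc_vertices :: "'a set \<Rightarrow> ('a \<Rightarrow> 'a \<Rightarrow> 'a) \<Rightarrow> 'a set" where
  "nc_vertices G m = G - centre G m"

definition nc_adj :: "'a set \<Rightarrow> ('a \<Rightarrow> 'a \<Rightarrow> 'a) \<Rightarrow> 'a \<Rightarrow> 'a \<Rightarrow> bool" where
  "nc_adj G m u v \<longleftrightarrow> u \<in> nc_vertices G m \<and> v \<in> nc_vertices G m \<and> u \<noteq> v \<and> m u v \<noteq> m v u"

definition is_walk :: "'a set \<Rightarrow> ('a \<Rightarrow> 'a \<Rightarrow> bool) \<Rightarrow> 'a list \<Rightarrow> bool" where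
  "is_walk V E xs \<longleftrightarrow> xs \<noteq> [] \<and> set xs \<subseteq> V \<and> (\<forall>i. Suc i < length xs \<longrightarrow> E (xs ! i) (xs ! Suc i))"

definition gdist :: "'a set \<Rightarrow> ('a \<Rightarrow> 'a \<Rightarrow> bool) \<Rightarrow> 'a \<Rightarrow> 'a \<Rightarrow> nat" where
  "gdist V E u v = (LEAST k. \<exists>xs. is_walk V E xs \<and> hd xs = u \<and> last xs = v \<and> length xs = Suc k)"

definition transmission :: "'a set \<Rightarrow> ('a \<Rightarrow> 'a \<Rightarrow> bool) \<Rightarrow> 'a \<Rightarrow> nat" where
  "transmission V E v = (\<Sum>u\<in>V. gdist V E u v)"

text \<open>Distance Laplacian D^L = Tr - D, as a matrix w.r.t. some fixed enumeration of V
  (the characteristic polynomial does not depend on the enumeration).\<close>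

definition vertex_list :: "'a set \<Rightarrow> 'a list" where
  "vertex_list V = (SOME xs. distinct xs \<and> set xs = V)"

definition dist_laplacian :: "'a set \<Rightarrow> ('a \<Rightarrow> 'a \<Rightarrow> bool) \<Rightarrow> real mat" where
  "dist_laplacian V E = (let vs = vertex_list V in
     mat (length vs) (length vs)
       (\<lambda>(i, j). (if i = j then real (transmission V E (vs ! i)) else 0)
                 - real (gdist V E (vs ! i) (vs ! j))))"

end

theory Submission
  imports Defs
begin

definition pt :: "nat \<Rightarrow> nat \<Rightarrow> nat" where
 "pt n a = (if 5*n - 4 \<le> a then a - (5*n-4) else if a < 2*n-1 then 0 else if a < 3*n-2 then 1 else if a < 4*n-3 then 2 else 3)"
definition pp :: "nat \<Rightarrow> nat \<Rightarrow> nat" where "pp n t = (if t = 0 then 2*n else n)"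
definition nxt :: "nat \<Rightarrow> nat \<Rightarrow> nat" where
 "nxt n k = (if 5*n-4 \<le> k then k+1 else if k+1 < 5*n-4 \<and> pt n (k+1) = pt n k then k+1 else 5*n-4 + pt n k)"
definition anc :: "nat \<Rightarrow> nat \<Rightarrow> nat set" where
 "anc n j = {i. i < 5*n \<and> (if 5*n-4 \<le> j then pt n i \<le> pt n j \<and> (5*n-4 \<le> i \<longrightarrow> i \<le> j)
     else i < 5*n-4 \<and> pt n i = pt n j \<and> i \<le> j)}"

lemma pt_le3: "n \<ge> 1 \<Longrightarrow> a < 5*n \<Longrightarrow> pt n a \<le> 3"
  unfolding pt_def by auto

lemma pt_sp: "n \<ge> 1 \<Longrightarrow> pt n (5*n-4+t) = t"
  unfolding pt_def by auto

lemma pt_mono: "n \<ge> 1 \<Longrightarrow> i \<le> j \<Longrightarrow> j < 5*n-4 \<Longrightarrow> pt n i \<le> pt n j"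
  unfolding pt_def by auto

lemma pt_ns_le: "n \<ge> 1 \<Longrightarrow> j < 5*n-4 \<Longrightarrow> pt n j \<le> 3"
  unfolding pt_def by auto

lemma nxt_props: "n \<ge> 1 \<Longrightarrow> k < 5*n - 1 \<Longrightarrow> k < nxt n k \<and> nxt n k < 5*n"
  unfolding nxt_def using pt_ns_le[of n k] by auto

lemma nxt_pt: "n \<ge> 1 \<Longrightarrow> k < 5*n - 4 \<Longrightarrow> pt n (nxt n k) = pt n k"
  unfolding nxt_def using pt_sp by auto

lemma nxt_cases: "n \<ge> 1 \<Longrightarrow> k < 5*n - 4 \<Longrightarrow>
   (nxt n k = k+1 \<and> k+1 < 5*n-4 \<and> pt n (k+1) = pt n k) \<or>
   (nxt n k = 5*n-4 + pt n k \<and> (\<forall>j. k < j \<and> j < 5*n-4 \<longrightarrow> pt n j \<noteq> pt n k))"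
proof -
  assume n: "n \<ge> 1" and k: "k < 5*n-4"
  show ?thesis
  proof (cases "k+1 < 5*n-4 \<and> pt n (k+1) = pt n k")
    case True then show ?thesis using k unfolding nxt_def by auto
  next
    case False
    have "\<forall>j. k < j \<and> j < 5*n-4 \<longrightarrow> pt n j \<noteq> pt n k"
    proof (intro allI impI)
      fix j assume j: "k < j \<and> j < 5*n-4"
      then have "k+1 < 5*n-4" by auto
      with False have "pt n (k+1) \<noteq> pt n k" by auto
      moreover have "pt n k \<le> pt n (k+1)" "pt n (k+1) \<le> pt n j" using pt_mono[OF n] j by auto
      ultimately show "pt n j \<noteq> pt n k" by auto
    qed
    then show ?thesis using False k unfolding nxt_def by auto
  qed
qed

lemma anc_le: "i \<in> anc n j \<Longrightarrow> i \<le> j"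
  unfolding anc_def by (auto split: if_splits)

lemma anc_key1: assumes n: "n \<ge> 1" and k: "k < 5*n - 4" and j: "j < 5*n"
  shows "(k \<in> anc n j) = (j = k \<or> nxt n k \<in> anc n j)"
proof -
  have pk: "pt n k \<le> 3" using pt_le3[OF n, of k] k by auto
  have ps: "pt n (5*n-4+t) = t" for t using pt_sp[OF n] .
  show ?thesis
  proof (cases "5*n-4 \<le> j")
    case True
    have pj: "j = 5*n-4 + pt n j" using ps[of "j-(5*n-4)"] True by auto
    then show ?thesis using True nxt_cases[OF n k] ps pk k j unfolding anc_def by auto
  next
    case False
    from nxt_cases[OF n k] show ?thesis
    proof
      assume "nxt n k = k+1 \<and> k+1 < 5*n-4 \<and> pt n (k+1) = pt n k"
      then show ?thesis using False k j unfolding anc_def by auto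
    next
      assume a: "nxt n k = 5*n-4 + pt n k \<and> (\<forall>j. k < j \<and> j < 5*n-4 \<longrightarrow> pt n j \<noteq> pt n k)"
      then have "nxt n k \<notin> anc n j" using False unfolding anc_def by auto
      moreover have "k \<in> anc n j \<longleftrightarrow> j = k"
      proof
        assume "k \<in> anc n j"
        then have "k \<le> j" "pt n j = pt n k" using False unfolding anc_def by auto
        then show "j = k" using a False by (metis le_neq_implies_less not_le)
      qed (use False k j in \<open>auto simp: anc_def\<close>)
      ultimately show ?thesis by auto
    qed
  qed
qed

lemma anc_key2: assumes n: "n \<ge> 1" and k: "k < 5*n - 4" and j: "j < 5*n" and h: "nxt n k \<in> anc n j"
  shows "j \<noteq> k"
proof
  assume "j = k"
  with h have "nxt n k \<le> k" using anc_le by auto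
  moreover have "k < nxt n k" using nxt_props[OF n, of k] k by auto
  ultimately show False by auto
qed

lemma fib0: "n \<ge> 1 \<Longrightarrow> {a. a < 5*n \<and> pt n a = 0} = {0..<2*n-1} \<union> {5*n-4}"
  unfolding pt_def by auto
lemma fib1: "n \<ge> 1 \<Longrightarrow> {a. a < 5*n \<and> pt n a = 1} = {2*n-1..<3*n-2} \<union> {5*n-3}"
  unfolding pt_def by auto
lemma fib2: "n \<ge> 1 \<Longrightarrow> {a. a < 5*n \<and> pt n a = 2} = {3*n-2..<4*n-3} \<union> {5*n-2}"
  unfolding pt_def by auto
lemma fib3: "n \<ge> 1 \<Longrightarrow> {a. a < 5*n \<and> pt n a = 3} = {4*n-3..<5*n-4} \<union> {5*n-1}"
  unfolding pt_def by auto

definition dd :: "nat \<Rightarrow> nat \<Rightarrow> real poly" where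
  "dd n t = [: - real (5*n + pp n t), 1 :]"
definition Kmat :: "nat \<Rightarrow> real poly mat" where
  "Kmat n = mat (5*n) (5*n) (\<lambda>(a,b). [: if pt n a = pt n b then 2 else 1 :] + (if a = b then dd n (pt n a) else 0))"
definition Lmat :: "nat \<Rightarrow> real poly mat" where
  "Lmat n = mat (5*n) (5*n) (\<lambda>(i,j). if i = j then 1 else if i < 5*n-1 \<and> j = nxt n i then -1 else 0)"
definition Rmat :: "nat \<Rightarrow> real poly mat" where
  "Rmat n = mat (5*n) (5*n) (\<lambda>(i,j). if i \<in> anc n j then 1 else 0)"

lemma const_poly_sum: "finite S \<Longrightarrow> (\<Sum>i\<in>S. [: f i :]) = [: \<Sum>i\<in>S. f i :]"
  by (induction S rule: finite_induct) auto

lemma sum_base: "finite S \<Longrightarrow> (\<Sum>i\<in>S. (if P i then 2 else 1) :: real) = real (card S) + real (card {i\<in>S. P i})"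
proof -
  assume True: "finite S"
  have "(\<Sum>i\<in>S. (if P i then 2 else 1) :: real) = (\<Sum>i\<in>S. 1 + (if P i then 1 else 0))"
    by (rule sum.cong) auto
  also have "\<dots> = real (card S) + real (card {i\<in>S. P i})"
    using True by (simp add: sum.distrib sum.If_cases Int_def)
  finally show ?thesis .
qed

lemma Kmat_carrier[simp]: "Kmat n \<in> carrier_mat (5*n) (5*n)"
  unfolding Kmat_def by simp
lemma Lmat_carrier[simp]: "Lmat n \<in> carrier_mat (5*n) (5*n)"
  unfolding Lmat_def by simp
lemma Rmat_carrier[simp]: "Rmat n \<in> carrier_mat (5*n) (5*n)"
  unfolding Rmat_def by simp

lemma dims[simp]: "dim_row (Kmat n) = 5*n" "dim_col (Kmat n) = 5*n" "dim_row (Lmat n) = 5*n" "dim_col (Lmat n) = 5*n"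
  "dim_row (Rmat n) = 5*n" "dim_col (Rmat n) = 5*n"
  by (auto simp: Kmat_def Lmat_def Rmat_def)

lemma sumK:
  assumes S: "S \<subseteq> {..<5*n}" and a: "a < 5*n"
  shows "(\<Sum>i\<in>S. Kmat n $$ (a,i)) = [: real (card S) + real (card {i\<in>S. pt n i = pt n a}) :]
            + (if a \<in> S then dd n (pt n a) else 0)"
proof -
  have fin: "finite S" using S finite_subset by blast
  have "(\<Sum>i\<in>S. Kmat n $$ (a,i)) = (\<Sum>i\<in>S. [: if pt n i = pt n a then 2 else 1 :] + (if a = i then dd n (pt n a) else 0))"
    by (rule sum.cong, insert S a, auto simp: Kmat_def)
  also have "\<dots> = (\<Sum>i\<in>S. [: if pt n i = pt n a then 2 else 1 :]) + (\<Sum>i\<in>S. (if a = i then dd n (pt n a) else 0))"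
    by (rule sum.distrib)
  also have "(\<Sum>i\<in>S. [: if pt n i = pt n a then 2 else 1 :]) = [: real (card S) + real (card {i\<in>S. pt n i = pt n a}) :]"
    by (simp add: const_poly_sum fin sum_base)
  also have "(\<Sum>i\<in>S. (if a = i then dd n (pt n a) else 0)) = (if a \<in> S then dd n (pt n a) else 0)"
    using fin by simp
  finally show ?thesis .
qed

lemma LK:
  assumes n: "n \<ge> 1" and k: "k < 5*n" and j: "j < 5*n"
  shows "(Lmat n * Kmat n) $$ (k,j) = Kmat n $$ (k,j) - (if k < 5*n-1 then Kmat n $$ (nxt n k, j) else 0)"
proof -
  have "(Lmat n * Kmat n) $$ (k,j) = (\<Sum>i\<in>{0..<5*n}. Lmat n $$ (k,i) * Kmat n $$ (i,j))"
    using k j by (simp add: scalar_prod_def Lmat_def Kmat_def)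
  also have "\<dots> = (\<Sum>i\<in>{0..<5*n}. (if i = k then Kmat n $$ (k,j) else 0) - (if k < 5*n-1 \<and> i = nxt n k then Kmat n $$ (nxt n k, j) else 0))"
  proof (rule sum.cong[OF refl])
    fix i assume i: "i \<in> {0..<5*n}"
    have "k < 5*n-1 \<Longrightarrow> nxt n k \<noteq> k" using nxt_props[OF n] by fastforce
    then show "Lmat n $$ (k,i) * Kmat n $$ (i,j) = (if i = k then Kmat n $$ (k,j) else 0) - (if k < 5*n-1 \<and> i = nxt n k then Kmat n $$ (nxt n k, j) else 0)"
      using i k by (auto simp: Lmat_def)
  qed
  also have "\<dots> = Kmat n $$ (k,j) - (if k < 5*n-1 then Kmat n $$ (nxt n k, j) else 0)"
    using k nxt_props[OF n, of k] by (simp add: sum_subtractf)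
  finally show ?thesis .
qed

lemma LKR:
  assumes n: "n \<ge> 1" and k: "k < 5*n" and j: "j < 5*n"
  shows "(Lmat n * Kmat n * Rmat n) $$ (k,j) = (\<Sum>i\<in>anc n j. Kmat n $$ (k,i))
     - (if k < 5*n-1 then (\<Sum>i\<in>anc n j. Kmat n $$ (nxt n k,i)) else 0)"
proof -
  have "(Lmat n * Kmat n * Rmat n) $$ (k,j) = (\<Sum>i\<in>{0..<5*n}. (Lmat n * Kmat n) $$ (k,i) * Rmat n $$ (i,j))"
    using k j by (simp add: scalar_prod_def)
  also have "\<dots> = (\<Sum>i\<in>{0..<5*n}. if i \<in> anc n j then (Lmat n * Kmat n) $$ (k,i) else 0)"
    by (rule sum.cong, insert j, auto simp: Rmat_def)
  also have "\<dots> = (\<Sum>i\<in>anc n j. (Lmat n * Kmat n) $$ (k,i))"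
    by (simp add: sum.If_cases, rule sum.cong, auto simp: anc_def)
  also have "\<dots> = (\<Sum>i\<in>anc n j. Kmat n $$ (k,i) - (if k < 5*n-1 then Kmat n $$ (nxt n k, i) else 0))"
    by (rule sum.cong, auto simp: anc_def LK[OF n k])
  also have "\<dots> = (\<Sum>i\<in>anc n j. Kmat n $$ (k,i))
     - (if k < 5*n-1 then (\<Sum>i\<in>anc n j. Kmat n $$ (nxt n k,i)) else 0)"
  proof (cases "k < 5*n-1")
    case True then show ?thesis by (simp add: sum_subtractf)
  next
    case False then show ?thesis by simp
  qed
  finally show ?thesis .
qed

lemma anc_sub: "anc n j \<subseteq> {..<5*n}" unfolding anc_def by auto

lemma anc_refl: "j < 5*n \<Longrightarrow> j \<in> anc n j" unfolding anc_def by auto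

lemma LKR_ns:
  assumes n: "n \<ge> 1" and k: "k < 5*n-4" and j: "j < 5*n"
  shows "(Lmat n * Kmat n * Rmat n) $$ (k,j) = (if j = k then dd n (pt n k) else 0)"
proof -
  have k1: "k < 5*n" "k < 5*n-1" using k by auto
  have nk: "nxt n k < 5*n" using nxt_props[OF n k1(2)] by auto
  have pn: "pt n (nxt n k) = pt n k" using nxt_pt[OF n k] .
  have "(Lmat n * Kmat n * Rmat n) $$ (k,j) = (if k \<in> anc n j then dd n (pt n k) else 0) - (if nxt n k \<in> anc n j then dd n (pt n k) else 0)"
    unfolding LKR[OF n k1(1) j] sumK[OF anc_sub k1(1)] sumK[OF anc_sub nk] pn using k1 by simp
  also have "\<dots> = (if j = k then dd n (pt n k) else 0)"
    using anc_key1[OF n k j] anc_key2[OF n k j] by auto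
  finally show ?thesis .
qed

lemma sp_eq: "n \<ge> 1 \<Longrightarrow> i < 5*n \<Longrightarrow> 5*n-4 \<le> i \<Longrightarrow> i = 5*n-4 + pt n i"
  using pt_sp[of n "i - (5*n-4)"] by auto

lemma card_iv: "hi \<le> x \<Longrightarrow> card ({lo..<hi} \<union> {x::nat}) = hi - lo + 1"
  by simp

lemma card_fib: assumes n: "n \<ge> 1" and s: "s \<le> 3" shows "card {a. a < 5*n \<and> pt n a = s} = pp n s"
proof -
  have c0: "card {a. a < 5*n \<and> pt n a = 0} = 2*n" using n by (subst fib0[OF n], subst card_iv) auto
  have c1: "card {a. a < 5*n \<and> pt n a = 1} = n" using n by (subst fib1[OF n], subst card_iv) auto
  have c2: "card {a. a < 5*n \<and> pt n a = 2} = n" using n by (subst fib2[OF n], subst card_iv) auto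
  have c3: "card {a. a < 5*n \<and> pt n a = 3} = n" using n by (subst fib3[OF n], subst card_iv) auto
  have "s = 0 \<or> s = 1 \<or> s = 2 \<or> s = 3" using s by auto
  then show ?thesis using c0 c1 c2 c3 by (auto simp: pp_def)
qed

lemma anc_fib: assumes n: "n \<ge> 1" and t: "t \<le> 3"
  shows "{i \<in> anc n (5*n-4+t). pt n i = s} = (if s \<le> t then {a. a < 5*n \<and> pt n a = s} else {})"
proof -
  have "5*n-4 \<le> 5*n-4+t" by simp
  have pt: "pt n (5*n-4+t) = t" using pt_sp[OF n] .
  show ?thesis unfolding anc_def pt using sp_eq[OF n] by (auto split: if_splits) (metis add_le_cancel_left)
qed

lemma LKR_sp:
  assumes n: "n \<ge> 1" and r: "r < 3" and t: "t \<le> 3" and rt: "r \<le> t"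
  shows "(Lmat n * Kmat n * Rmat n) $$ (5*n-4+r, 5*n-4+t) = (if t = r then [: - real (5*n), 1 :] else 0)"
proof -
  let ?k = "5*n-4+r" and ?j = "5*n-4+t"
  have k: "?k < 5*n" "?k < 5*n-1" using n r by auto
  have j: "?j < 5*n" using n t by auto
  have nk: "nxt n ?k = ?k + 1" unfolding nxt_def by simp
  have k1: "?k + 1 < 5*n" "?k + 1 = 5*n-4+(r+1)" using n r by auto
  have ptk: "pt n ?k = r" "pt n (?k+1) = r+1" using pt_sp[OF n, of r] pt_sp[OF n, of "r+1"] k1(2) by simp_all
  have c1: "card {i \<in> anc n ?j. pt n i = r} = pp n r"
    using anc_fib[OF n t, of r] rt card_fib[OF n, of r] r by auto
  have c2: "card {i \<in> anc n ?j. pt n i = r+1} = (if r+1 \<le> t then pp n (r+1) else 0)"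
    using anc_fib[OF n t, of "r+1"] card_fib[OF n, of "r+1"] r by auto
  have ptj: "pt n ?j = t" using pt_sp[OF n] .
  have m1: "?k \<in> anc n ?j" unfolding anc_def using ptk ptj rt k j by auto
  have m2: "(?k+1 \<in> anc n ?j) = (r+1 \<le> t)" unfolding anc_def using ptk ptj k1 j by auto
  have "(Lmat n * Kmat n * Rmat n) $$ (?k, ?j) =
     ([: real (card (anc n ?j)) + real (pp n r) :] + dd n r)
     - ([: real (card (anc n ?j)) + real (if r+1 \<le> t then pp n (r+1) else 0) :] + (if r+1 \<le> t then dd n (r+1) else 0))"
    unfolding LKR[OF n k(1) j] nk sumK[OF anc_sub k(1)] sumK[OF anc_sub k1(1)] ptk c1 c2
    using k m1 m2 by simp
  also have "\<dots> = (if t = r then [: - real (5*n), 1 :] else 0)"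
    using rt by (auto simp: dd_def pp_def)
  finally show ?thesis .
qed

lemma LKR_last:
  assumes n: "n \<ge> 1"
  shows "(Lmat n * Kmat n * Rmat n) $$ (5*n-1, 5*n-1) = [: 0, 1 :]"
proof -
  have k: "5*n-1 < 5*n" using n by auto
  have e: "5*n-1 = 5*n-4+3" using n by simp
  have p3: "pt n (5*n-1) = 3" unfolding e by (rule pt_sp[OF n])
  have a: "anc n (5*n-1) = {..<5*n}" unfolding anc_def using pt_le3[OF n] p3 by auto
  have c: "card {i \<in> {..<5*n}. pt n i = 3} = n" using card_fib[OF n, of 3] by (simp add: pp_def lessThan_def)
  show ?thesis
    unfolding LKR[OF n k k] a sumK[OF subset_refl k] p3 c using k by (simp add: dd_def pp_def)
qed

lemma LKR_lower:
  assumes n: "n \<ge> 1" and kj: "k < j" and j: "j < 5*n"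
  shows "(Lmat n * Kmat n * Rmat n) $$ (k,j) = 0"
proof (cases "k < 5*n-4")
  case True then show ?thesis using LKR_ns[OF n True j] kj by auto
next
  case False
  have k: "k = 5*n-4 + pt n k" using sp_eq[OF n, of k] False kj j by auto
  have jj: "j = 5*n-4 + pt n j" using sp_eq[OF n, of j] False kj j by auto
  have r: "pt n k < 3" using k kj j by linarith
  have t: "pt n j \<le> 3" using pt_le3[OF n j] .
  have rt: "pt n k \<le> pt n j" "pt n j \<noteq> pt n k" using k jj kj by linarith+
  show ?thesis using LKR_sp[OF n r t rt(1)] rt(2) k jj by metis
qed

definition gdiag :: "nat \<Rightarrow> nat \<Rightarrow> real poly" where
  "gdiag n k = (if k < 5*n-4 then dd n (pt n k) else if k < 5*n-1 then [: - real (5*n), 1 :] else [:0,1:])"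

lemma LKR_diag:
  assumes n: "n \<ge> 1" and k: "k < 5*n"
  shows "(Lmat n * Kmat n * Rmat n) $$ (k,k) = gdiag n k"
proof (cases "k < 5*n-4")
  case True then show ?thesis using LKR_ns[OF n True k] by (simp add: gdiag_def)
next
  case False
  note kk = sp_eq[OF n k] 
  show ?thesis
  proof (cases "k < 5*n-1")
    case True
    have r: "pt n k < 3" using kk True False by linarith
    have "(Lmat n * Kmat n * Rmat n) $$ (k,k) = [: - real (5*n), 1 :]"
      using LKR_sp[OF n r, of "pt n k"] r kk False by (metis le_refl less_imp_le_nat not_le)
    then show ?thesis using True False by (simp add: gdiag_def)
  next
    case False2: False
    then have "k = 5*n-1" using k by auto
    then show ?thesis using LKR_last[OF n] False False2 by (simp add: gdiag_def)
  qed
qed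

lemma det_L: "det (Lmat n) = 1"
proof -
  have ut: "upper_triangular (Lmat n)"
  proof (cases "n = 0")
    case True then show ?thesis unfolding upper_triangular_def by simp
  next
    case False then have n: "n \<ge> 1" by auto
    show ?thesis unfolding upper_triangular_def
    proof (intro allI impI)
      fix i j assume i: "i < dim_row (Lmat n)" and ji: "j < i"
      have "i < 5*n-1 \<Longrightarrow> i < nxt n i" using nxt_props[OF n] by auto
      then show "Lmat n $$ (i,j) = 0" using i ji by (auto simp: Lmat_def)
    qed
  qed
  have "det (Lmat n) = prod_list (diag_mat (Lmat n))" by (rule det_upper_triangular[OF ut Lmat_carrier])
  also have "\<dots> = 1" unfolding prod_list_diag_prod by (rule prod.neutral) (auto simp: Lmat_def)
  finally show ?thesis .
qed

lemma det_R: "det (Rmat n) = 1"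
proof -
  have ut: "upper_triangular (Rmat n)"
    unfolding upper_triangular_def Rmat_def using anc_le by fastforce
  have "det (Rmat n) = prod_list (diag_mat (Rmat n))" by (rule det_upper_triangular[OF ut Rmat_carrier])
  also have "\<dots> = 1" unfolding prod_list_diag_prod by (rule prod.neutral) (auto simp: Rmat_def anc_refl)
  finally show ?thesis .
qed

lemma pt_mid: "n \<ge> 1 \<Longrightarrow> 2*n-1 \<le> k \<Longrightarrow> k < 5*n-4 \<Longrightarrow> pt n k \<noteq> 0"
  unfolding pt_def by auto
lemma pt_low: "n \<ge> 1 \<Longrightarrow> k < 2*n-1 \<Longrightarrow> pt n k = 0"
  unfolding pt_def by auto

lemma det_K:
  assumes n: "n \<ge> 1"
  shows "det (Kmat n) = [:0, 1:] * [:- (5 * real n), 1:] ^ 3 * [:- (6 * real n), 1:] ^ (3 * (n - 1))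
           * [:- (7 * real n), 1:] ^ (2 * n - 1)"
proof -
  have LKc: "Lmat n * Kmat n \<in> carrier_mat (5*n) (5*n)" using mult_carrier_mat[OF Lmat_carrier Kmat_carrier] .
  have "det (Lmat n * Kmat n * Rmat n) = det (Kmat n)"
    by (simp add: det_mult[OF LKc Rmat_carrier] det_mult[OF Lmat_carrier Kmat_carrier] det_L det_R)
  moreover have "det (Lmat n * Kmat n * Rmat n) = prod_list (diag_mat (Lmat n * Kmat n * Rmat n))"
    by (rule det_lower_triangular[of "5*n"], insert LKR_lower[OF n], auto)
  moreover have "prod_list (diag_mat (Lmat n * Kmat n * Rmat n)) = (\<Prod>k = 0..<5*n. gdiag n k)"
    unfolding prod_list_diag_prod by (rule prod.cong, simp, simp del: index_mult_mat add: LKR_diag[OF n])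
  moreover have "(\<Prod>k = 0..<5*n. gdiag n k) = (\<Prod>k = 0..<2*n-1. gdiag n k) * (\<Prod>k = 2*n-1..<5*n-4. gdiag n k)
      * (\<Prod>k = 5*n-4..<5*n-1. gdiag n k) * (\<Prod>k = 5*n-1..<5*n. gdiag n k)"
    using n by (simp add: prod.atLeastLessThan_concat)
  moreover have "(\<Prod>k = 0..<2*n-1. gdiag n k) = [:- (7 * real n), 1:] ^ (2 * n - 1)"
  proof -
    have "(\<Prod>k = 0..<2*n-1. gdiag n k) = (\<Prod>k = 0..<2*n-1. [:- (7 * real n), 1:])"
      by (rule prod.cong, auto simp: gdiag_def pt_low[OF n] dd_def pp_def)
    then show ?thesis by simp
  qed
  moreover have "(\<Prod>k = 2*n-1..<5*n-4. gdiag n k) = [:- (6 * real n), 1:] ^ (3 * (n - 1))"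
  proof -
    have "(\<Prod>k = 2*n-1..<5*n-4. gdiag n k) = (\<Prod>k = 2*n-1..<5*n-4. [:- (6 * real n), 1:])"
      by (rule prod.cong, auto simp: gdiag_def pt_mid[OF n] dd_def pp_def)
    moreover have "5*n-4 - (2*n-1) = 3*(n-1)" using n by auto
    ultimately show ?thesis by simp
  qed
  moreover have "(\<Prod>k = 5*n-4..<5*n-1. gdiag n k) = [:- (5 * real n), 1:] ^ 3"
  proof -
    have "(\<Prod>k = 5*n-4..<5*n-1. gdiag n k) = (\<Prod>k = 5*n-4..<5*n-1. [:- (5 * real n), 1:])"
      by (rule prod.cong, auto simp: gdiag_def)
    moreover have "5*n-1 - (5*n-4) = 3" using n by auto
    ultimately show ?thesis by simp
  qed
  moreover have "(\<Prod>k = 5*n-1..<5*n. gdiag n k) = [:0,1:]"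
  proof -
    have "{5*n-1..<5*n} = {5*n-1}" using n by auto
    moreover have "gdiag n (5*n-1) = [:0,1:]" unfolding gdiag_def using n by auto
    ultimately show ?thesis by simp
  qed
  ultimately show ?thesis by (simp add: ac_simps)
qed

lemma det_perm_sim:
  assumes C: "C \<in> carrier_mat N N" and p: "p permutes {0..<N}"
  shows "det (mat N N (\<lambda>(i,j). C $$ (p i, p j))) = det C"
proof -
  define C1 where "C1 = mat N N (\<lambda>(i,j). C $$ (p i, j))"
  have C1c: "C1 \<in> carrier_mat N N" unfolding C1_def by simp
  have d1: "det C1 = signof p * det C" unfolding C1_def by (rule det_permute_rows[OF C p])
  have pN: "i < N \<Longrightarrow> p i < N" for i using p by (simp add: permutes_in_image)
  have eq: "mat N N (\<lambda>(i,j). C $$ (p i, p j)) = transpose_mat (mat N N (\<lambda>(i,j). (transpose_mat C1) $$ (p i, j)))"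
    by (rule eq_matI, insert C1c pN, auto simp: C1_def)
  have TC: "transpose_mat C1 \<in> carrier_mat N N" using C1c by simp
  have "det (mat N N (\<lambda>(i,j). C $$ (p i, p j))) = det (mat N N (\<lambda>(i,j). (transpose_mat C1) $$ (p i, j)))"
    unfolding eq by (rule det_transpose[of _ N], simp)
  also have "\<dots> = signof p * det (transpose_mat C1)" by (rule det_permute_rows[OF TC p])
  also have "\<dots> = signof p * (signof p * det C)" using det_transpose[OF C1c] d1 by simp
  also have "\<dots> = det C" by (cases p rule: sign_cases) auto
  finally show ?thesis .
qed

lemma fiber_bij:
  assumes fV: "finite V" and fA: "finite A"
    and c: "\<And>t. card {v\<in>V. g v = t} = card {a\<in>A. h a = t}"
  shows "\<exists>f. bij_betw f V A \<and> (\<forall>v\<in>V. h (f v) = g v)"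
proof -
  have "\<forall>t. \<exists>f. bij_betw f {v\<in>V. g v = t} {a\<in>A. h a = t}"
  proof
    fix t show "\<exists>f. bij_betw f {v\<in>V. g v = t} {a\<in>A. h a = t}"
      by (rule finite_same_card_bij, insert fV fA c, auto)
  qed
  then obtain F where F: "\<And>t. bij_betw (F t) {v\<in>V. g v = t} {a\<in>A. h a = t}" by metis
  define f where "f v = F (g v) v" for v
  have img: "v \<in> V \<Longrightarrow> f v \<in> A \<and> h (f v) = g v" for v
    using bij_betwE[OF F[of "g v"]] unfolding f_def by auto
  have inj: "inj_on f V"
  proof
    fix u v assume u: "u \<in> V" and v: "v \<in> V" and e: "f u = f v"
    then have "g u = g v" using img by metis
    then show "u = v" using e u v bij_betw_imp_inj_on[OF F[of "g u"]] unfolding f_def inj_on_def by auto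
  qed
  have surj: "f ` V = A"
  proof
    show "f ` V \<subseteq> A" using img by auto
    show "A \<subseteq> f ` V"
    proof
      fix a assume a: "a \<in> A"
      then have "a \<in> F (h a) ` {v\<in>V. g v = h a}" using bij_betw_imp_surj_on[OF F[of "h a"]] by auto
      then obtain v where v: "v \<in> V" "g v = h a" "a = F (h a) v" by auto
      then have "a = f v" unfolding f_def by simp
      then show "a \<in> f ` V" using v(1) by blast
    qed
  qed
  show ?thesis using inj surj img unfolding bij_betw_def by auto
qed

lemma gd0: assumes u: "u \<in> V" shows "gdist V E u u = 0"
  unfolding gdist_def
  by (rule Least_eq_0, rule exI[of _ "[u]"], insert u, auto simp: is_walk_def)

lemma walk1: "length xs = Suc 0 \<Longrightarrow> hd xs = last xs"
  by (cases xs) auto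

lemma walk2: assumes w: "is_walk V E xs" and l: "length xs = 2" shows "E (hd xs) (last xs)"
proof -
  have "E (xs!0) (xs!1)" using w l unfolding is_walk_def by auto
  moreover have "xs \<noteq> []" using l by auto
  moreover have "last xs = xs ! 1" using l last_conv_nth[of xs] by fastforce
  ultimately show ?thesis by (simp add: hd_conv_nth)
qed

lemma gd1: assumes u: "u \<in> V" and v: "v \<in> V" and e: "E u v" and uv: "u \<noteq> v"
  shows "gdist V E u v = 1"
  unfolding gdist_def
proof (rule Least_equality)
  show "\<exists>xs. is_walk V E xs \<and> hd xs = u \<and> last xs = v \<and> length xs = Suc 1"
    by (rule exI[of _ "[u,v]"], insert u v e, auto simp: is_walk_def less_Suc_eq)
  fix y assume "\<exists>xs. is_walk V E xs \<and> hd xs = u \<and> last xs = v \<and> length xs = Suc y"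
  then show "1 \<le> y" using walk1 uv by (cases y) auto
qed

lemma gd2: assumes u: "u \<in> V" and v: "v \<in> V" and w: "w \<in> V" and e1: "E u w" and e2: "E w v"
  and ne: "\<not> E u v" and uv: "u \<noteq> v"
  shows "gdist V E u v = 2"
  unfolding gdist_def
proof (rule Least_equality)
  show "\<exists>xs. is_walk V E xs \<and> hd xs = u \<and> last xs = v \<and> length xs = Suc 2"
  proof (rule exI[of _ "[u,w,v]"], intro conjI)
    show "is_walk V E [u,w,v]" unfolding is_walk_def
    proof (intro conjI allI impI)
      fix i assume "Suc i < length [u,w,v]"
      then have "i = 0 \<or> i = 1" by auto
      then show "E ([u,w,v] ! i) ([u,w,v] ! Suc i)" using e1 e2 by auto
    qed (use u v w in auto)
  qed auto
  fix y assume a: "\<exists>xs. is_walk V E xs \<and> hd xs = u \<and> last xs = v \<and> length xs = Suc y"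
  show "2 \<le> y"
  proof (rule ccontr)
    assume "\<not> 2 \<le> y"
    then have "y = 0 \<or> y = 1" by auto
    then show False
    proof
      assume "y = 0" then show False using a walk1 uv by auto
    next
      assume "y = 1"
      then obtain xs where "is_walk V E xs" "hd xs = u" "last xs = v" "length xs = 2" using a by auto
      then show False using walk2[of V E xs] ne by auto
    qed
  qed
qed

definition vpart :: "nat \<times> nat \<Rightarrow> nat" where
  "vpart v = (if even (fst v) then 0 else snd v + 1)"

lemma comm_iff: "(U6n_mult n (i1,j1) (i2,j2) = U6n_mult n (i2,j2) (i1,j1)) \<longleftrightarrow>
   ((if even i2 then j1 else 2*j1) + j2) mod 3 = ((if even i1 then j2 else 2*j2) + j1) mod 3"
  by (simp add: U6n_mult_def add.commute)

lemma centre_eq: assumes n: "n \<ge> 1"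
  shows "centre (U6n_carrier n) (U6n_mult n) = {(i,j). i < 2*n \<and> even i \<and> j = 0}"
proof
  show "centre (U6n_carrier n) (U6n_mult n) \<subseteq> {(i,j). i < 2*n \<and> even i \<and> j = 0}"
  proof
    fix z assume z: "z \<in> centre (U6n_carrier n) (U6n_mult n)"
    obtain i j where zz: "z = (i,j)" by (cases z)
    have ij: "i < 2*n" "j < 3" using z zz by (auto simp: centre_def U6n_carrier_def)
    have g1: "(1::nat, 0::nat) \<in> U6n_carrier n" "(0::nat, 1::nat) \<in> U6n_carrier n" using n by (auto simp: U6n_carrier_def)
    have c1: "U6n_mult n (i,j) (1,0) = U6n_mult n (1,0) (i,j)" using z zz g1 by (auto simp: centre_def)
    have c2: "U6n_mult n (i,j) (0,1) = U6n_mult n (0,1) (i,j)" using z zz g1 by (auto simp: centre_def)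
    have "j = 0 \<or> j = 1 \<or> j = 2" using ij by auto
    then have j0: "j = 0" using c1 unfolding comm_iff by (auto split: if_splits)
    have "even i" using c2 j0 unfolding comm_iff by (auto split: if_splits)
    then show "z \<in> {(i,j). i < 2*n \<and> even i \<and> j = 0}" using zz ij j0 by auto
  qed
  show "{(i,j). i < 2*n \<and> even i \<and> j = 0} \<subseteq> centre (U6n_carrier n) (U6n_mult n)"
  proof
    fix z :: "nat \<times> nat" assume z: "z \<in> {(i,j). i < 2*n \<and> even i \<and> j = 0}"
    obtain i j where zz: "z = (i,j)" by (cases z)
    have "\<forall>g \<in> U6n_carrier n. U6n_mult n z g = U6n_mult n g z"
    proof
      fix g assume g: "g \<in> U6n_carrier n"
      obtain i2 j2 where gg: "g = (i2,j2)" by (cases g)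
      have "j2 < 3" using g gg by (auto simp: U6n_carrier_def)
      then show "U6n_mult n z g = U6n_mult n g z" using z zz gg by (auto simp: comm_iff)
    qed
    then show "z \<in> centre (U6n_carrier n) (U6n_mult n)" using z zz by (auto simp: centre_def U6n_carrier_def)
  qed
qed

lemma V_eq: assumes n: "n \<ge> 1"
  shows "nc_vertices (U6n_carrier n) (U6n_mult n) = {(i,j). i < 2*n \<and> j < 3 \<and> \<not> (even i \<and> j = 0)}"
  unfolding nc_vertices_def centre_eq[OF n] by (auto simp: U6n_carrier_def)

lemma noncomm_iff: assumes "j1 < 3" "j2 < 3" "\<not> (even i1 \<and> j1 = 0)" "\<not> (even i2 \<and> j2 = 0)"
  shows "(U6n_mult n (i1,j1) (i2,j2) \<noteq> U6n_mult n (i2,j2) (i1,j1)) \<longleftrightarrow> vpart (i1,j1) \<noteq> vpart (i2,j2)"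
proof -
  have "j1 = 0 \<or> j1 = 1 \<or> j1 = 2" "j2 = 0 \<or> j2 = 1 \<or> j2 = 2" using assms by auto
  then show ?thesis unfolding comm_iff vpart_def using assms by auto
qed

lemma adj_iff: assumes n: "n \<ge> 1"
  and u: "u \<in> nc_vertices (U6n_carrier n) (U6n_mult n)" and v: "v \<in> nc_vertices (U6n_carrier n) (U6n_mult n)"
  shows "nc_adj (U6n_carrier n) (U6n_mult n) u v \<longleftrightarrow> vpart u \<noteq> vpart v"
proof -
  obtain i1 j1 where uu: "u = (i1,j1)" by (cases u)
  obtain i2 j2 where vv: "v = (i2,j2)" by (cases v)
  have a: "j1 < 3" "j2 < 3" "\<not> (even i1 \<and> j1 = 0)" "\<not> (even i2 \<and> j2 = 0)"
    using u v uu vv unfolding V_eq[OF n] by auto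
  show ?thesis unfolding nc_adj_def using u v uu vv noncomm_iff[OF a, of n] by auto
qed

lemma vpart_le: assumes n: "n \<ge> 1" and v: "v \<in> nc_vertices (U6n_carrier n) (U6n_mult n)"
  shows "vpart v \<le> 3"
  using v unfolding V_eq[OF n] vpart_def by auto

lemma gdist_eq: assumes n: "n \<ge> 1"
  and u: "u \<in> nc_vertices (U6n_carrier n) (U6n_mult n)" and v: "v \<in> nc_vertices (U6n_carrier n) (U6n_mult n)"
  shows "gdist (nc_vertices (U6n_carrier n) (U6n_mult n)) (nc_adj (U6n_carrier n) (U6n_mult n)) u v
     = (if u = v then 0 else if vpart u = vpart v then 2 else 1)"
proof -
  let ?V = "nc_vertices (U6n_carrier n) (U6n_mult n)" and ?E = "nc_adj (U6n_carrier n) (U6n_mult n)"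
  show ?thesis
  proof (cases "u = v")
    case True then show ?thesis using gd0[OF u] by simp
  next
    case uv: False
    show ?thesis
    proof (cases "vpart u = vpart v")
      case False
      then show ?thesis using gd1[OF u v _ uv] adj_iff[OF n u v] uv by simp
    next
      case True
      define w where "w = (if vpart u = 0 then (1::nat,0::nat) else (0,1))"
      have w: "w \<in> ?V" unfolding w_def V_eq[OF n] using n by auto
      have wp: "vpart w \<noteq> vpart u" unfolding w_def vpart_def by auto
      have "gdist ?V ?E u v = 2"
        by (rule gd2[OF u v w], insert adj_iff[OF n u w] adj_iff[OF n w v] adj_iff[OF n u v] wp True uv, auto)
      then show ?thesis using True uv by simp
    qed
  qed
qed

lemma card_even: "card {i::nat. i < 2*n \<and> even i} = n"
proof -
  have "{i::nat. i < 2*n \<and> even i} = (\<lambda>k. 2*k) ` {..<n}" by (auto elim!: evenE)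
  then show ?thesis by (simp add: card_image inj_on_def)
qed

lemma card_odd: "card {i::nat. i < 2*n \<and> odd i} = n"
proof -
  have "{i::nat. i < 2*n \<and> odd i} = (\<lambda>k. 2*k+1) ` {..<n}" by (auto elim!: oddE)
  then show ?thesis by (simp add: card_image inj_on_def)
qed

lemma vfib: assumes n: "n \<ge> 1"
  shows "card {v \<in> nc_vertices (U6n_carrier n) (U6n_mult n). vpart v = t} = card {a \<in> {..<5*n}. pt n a = t}"
proof (cases "t \<le> 3")
  case False
  have e1: "{v \<in> nc_vertices (U6n_carrier n) (U6n_mult n). vpart v = t} = {}" using vpart_le[OF n] False by fastforce
  have e2: "{a \<in> {..<5*n}. pt n a = t} = {}" using pt_le3[OF n] False by fastforce
  show ?thesis unfolding e1 e2 by simp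
next
  case True
  have r: "card {a \<in> {..<5*n}. pt n a = t} = pp n t" using card_fib[OF n True] by simp
  show ?thesis
  proof (cases "t = 0")
    case t0: True
    have "{v \<in> nc_vertices (U6n_carrier n) (U6n_mult n). vpart v = t} = {i. i < 2*n \<and> even i} \<times> {1,2}"
      unfolding V_eq[OF n] vpart_def t0 by auto
    then show ?thesis using r t0 card_even[of n] by (simp add: card_cartesian_product pp_def)
  next
    case False
    have "{v \<in> nc_vertices (U6n_carrier n) (U6n_mult n). vpart v = t} = (\<lambda>i. (i, t - 1)) ` {i. i < 2*n \<and> odd i}"
      unfolding V_eq[OF n] vpart_def using False True by (auto simp: image_iff)
    moreover have "card ((\<lambda>i. (i, t - 1)) ` {i. i < 2*n \<and> odd i}) = n"
      using card_odd[of n] by (simp add: card_image inj_on_def)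
    ultimately show ?thesis using r False by (simp add: pp_def)
  qed
qed

lemma sum_base_nat: "finite S \<Longrightarrow> (\<Sum>i\<in>S. (if P i then 2 else 1) :: nat) = card S + card {i\<in>S. P i}"
proof -
  assume fin: "finite S"
  have "(\<Sum>i\<in>S. (if P i then 2 else 1) :: nat) = (\<Sum>i\<in>S. 1 + (if P i then 1 else 0))"
    by (rule sum.cong) auto
  also have "\<dots> = card S + card {i\<in>S. P i}"
    using fin by (subst sum.distrib) (simp add: sum.If_cases Int_def)
  finally show ?thesis .
qed

theorem theorem5p2:
  fixes n :: nat
  assumes "n \<ge> 1"
  shows "char_poly (dist_laplacian (nc_vertices (U6n_carrier n) (U6n_mult n))
                                   (nc_adj (U6n_carrier n) (U6n_mult n)))
         = [:0, 1:]
           * [:- (5 * real n), 1:] ^ 3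
           * [:- (6 * real n), 1:] ^ (3 * (n - 1))
           * [:- (7 * real n), 1:] ^ (2 * n - 1)"
proof -
  note n = assms
  define V where "V = nc_vertices (U6n_carrier n) (U6n_mult n)"
  define E where "E = nc_adj (U6n_carrier n) (U6n_mult n)"
  have finV: "finite V" unfolding V_def V_eq[OF n]
    by (rule finite_subset[of _ "{..<2*n} \<times> {..<3}"]) auto
  obtain f where f: "bij_betw f V {..<5*n}" and fp: "\<And>v. v \<in> V \<Longrightarrow> pt n (f v) = vpart v"
    using fiber_bij[OF finV, of "{..<5*n}" vpart "pt n"] vfib[OF n] unfolding V_def by auto
  have cardV: "card V = 5*n" using bij_betw_same_card[OF f] by simp
  have cardF: "v \<in> V \<Longrightarrow> card {u\<in>V. vpart u = vpart v} = pp n (vpart v)" for v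
    using vfib[OF n, of "vpart v"] card_fib[OF n vpart_le[OF n, of v]] unfolding V_def by simp
  have gd: "u \<in> V \<Longrightarrow> v \<in> V \<Longrightarrow> gdist V E u v = (if u = v then 0 else if vpart u = vpart v then 2 else 1)" for u v
    unfolding V_def E_def by (rule gdist_eq[OF n])
  have tr: "v \<in> V \<Longrightarrow> transmission V E v = 5*n + pp n (vpart v) - 2" for v
  proof -
    assume v: "v \<in> V"
    let ?g = "\<lambda>u. (if vpart u = vpart v then 2 else 1) :: nat"
    have "(\<Sum>u\<in>V. ?g u) = ?g v + (\<Sum>u\<in>V-{v}. ?g u)" by (rule sum.remove[OF finV v])
    moreover have "(\<Sum>u\<in>V. ?g u) = 5*n + pp n (vpart v)"
      using sum_base_nat[OF finV] cardV cardF[OF v] by simp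
    moreover have "transmission V E v = (\<Sum>u\<in>V-{v}. ?g u)"
    proof -
      have "transmission V E v = gdist V E v v + (\<Sum>u\<in>V-{v}. gdist V E u v)"
        unfolding transmission_def by (rule sum.remove[OF finV v])
      also have "\<dots> = (\<Sum>u\<in>V-{v}. ?g u)" using gd v by (auto intro!: sum.cong)
      finally show ?thesis .
    qed
    ultimately show ?thesis by simp
  qed
  define vs where "vs = vertex_list V"
  have vs: "distinct vs \<and> set vs = V"
    unfolding vs_def vertex_list_def by (rule someI_ex, insert finite_distinct_list[OF finV], auto)
  have lvs: "length vs = 5*n" using distinct_card[of vs] vs cardV by simp
  define p where "p i = (if i < 5*n then f (vs ! i) else i)" for i
  have bnth: "bij_betw ((!) vs) {..<5*n} V" by (rule bij_betw_nth, insert vs lvs, auto)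
  have bp0: "bij_betw (f \<circ> (!) vs) {..<5*n} {..<5*n}" by (rule bij_betw_trans[OF bnth f])
  have bp: "bij_betw p {0..<5*n} {0..<5*n}"
    using bp0 unfolding lessThan_atLeast0[symmetric] by (rule bij_betw_cong[THEN iffD1, rotated]) (auto simp: p_def lessThan_atLeast0)
  have pperm: "p permutes {0..<5*n}" by (rule bij_imp_permutes[OF bp], auto simp: p_def)
  have dvs: "distinct vs" and svs: "set vs = V" using vs by auto
  have vsV: "vs ! i \<in> V" if i: "i < 5*n" for i
  proof -
    have "vs ! i \<in> set vs" using i lvs by simp
    then show ?thesis using svs by simp
  qed
  have ppt: "pt n (p i) = vpart (vs ! i)" if i: "i < 5*n" for i
  proof -
    have "p i = f (vs ! i)" unfolding p_def using i by simp
    then show ?thesis using fp[OF vsV[OF i]] by simp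
  qed
  have pinj: "(p i = p j) = (i = j)" if i: "i < 5*n" and j: "j < 5*n" for i j
  proof
    assume "p i = p j"
    then show "i = j" using inj_onD[OF bij_betw_imp_inj_on[OF bp]] i j by simp
  qed simp
  have vsinj: "(vs ! i = vs ! j) = (i = j)" if i: "i < 5*n" and j: "j < 5*n" for i j
    using nth_eq_iff_index_eq[OF dvs, of i j] i j lvs by simp
  have DL: "dist_laplacian V E = mat (5*n) (5*n) (\<lambda>(i,j). (if i = j then real (transmission V E (vs ! i)) else 0)
       - real (gdist V E (vs ! i) (vs ! j)))"
    unfolding dist_laplacian_def Let_def vs_def[symmetric] lvs ..
  have CM: "char_poly_matrix (dist_laplacian V E) = mat (5*n) (5*n) (\<lambda>(i,j). Kmat n $$ (p i, p j))"
  proof (rule eq_matI)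
    fix i j assume i: "i < dim_row (mat (5*n) (5*n) (\<lambda>(i,j). Kmat n $$ (p i, p j)))"
      and j: "j < dim_col (mat (5*n) (5*n) (\<lambda>(i,j). Kmat n $$ (p i, p j)))"
    then have i: "i < 5*n" and j: "j < 5*n" by auto
    have pi: "p i < 5*n" "p j < 5*n" using bp i j unfolding bij_betw_def by auto
    have lhs: "char_poly_matrix (dist_laplacian V E) $$ (i,j) =
        [:0,1:] * (if i = j then 1 else 0) + [: - ((if i = j then real (transmission V E (vs ! i)) else 0)
       - real (gdist V E (vs ! i) (vs ! j))) :]"
      unfolding char_poly_matrix_def DL using i j by simp
    have rhs: "Kmat n $$ (p i, p j) = [: if vpart (vs ! i) = vpart (vs ! j) then 2 else 1 :]
       + (if i = j then dd n (vpart (vs ! i)) else 0)"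
      unfolding Kmat_def using pi i j ppt pinj by simp
    show "char_poly_matrix (dist_laplacian V E) $$ (i,j) = mat (5*n) (5*n) (\<lambda>(i,j). Kmat n $$ (p i, p j)) $$ (i,j)"
    proof (cases "i = j")
      case True
      have t: "real (transmission V E (vs ! i)) = 5 * real n + real (pp n (vpart (vs ! i))) - 2"
        using tr[OF vsV[OF i]] n by (simp add: pp_def of_nat_diff)
      have "char_poly_matrix (dist_laplacian V E) $$ (i,i) = mat (5*n) (5*n) (\<lambda>(i,j). Kmat n $$ (p i, p j)) $$ (i,i)"
        using i unfolding lhs[unfolded True[symmetric]] by (simp add: rhs[unfolded True[symmetric]] t gd[OF vsV[OF i] vsV[OF i]] dd_def)
      then show ?thesis unfolding True[symmetric] .
    next
      case False
      show ?thesis using False i j unfolding lhs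
        by (simp add: rhs gd[OF vsV[OF i] vsV[OF j]] vsinj)
    qed
  qed (simp_all add: char_poly_matrix_def DL)
  have "char_poly (dist_laplacian V E) = det (mat (5*n) (5*n) (\<lambda>(i,j). Kmat n $$ (p i, p j)))"
    unfolding char_poly_def CM ..
  also have "\<dots> = det (Kmat n)" by (rule det_perm_sim[OF Kmat_carrier pperm])
  also have "\<dots> = [:0, 1:] * [:- (5 * real n), 1:] ^ 3 * [:- (6 * real n), 1:] ^ (3 * (n - 1))
           * [:- (7 * real n), 1:] ^ (2 * n - 1)" by (rule det_K[OF n])
  finally show ?thesis unfolding V_def E_def .
qed

end
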